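(* Let $$A=\begin{pmatrix}1&1&2&2\\1&0&1&2\\2&1&0&1\\2&2&1&1\end{pmatrix}.$$ Then $\operatorname{rk}(A)=\operatorname{rk}_+(A)=3$ and $\operatorname{st}_+(A)=4$.
   Context: The SNT-rank $\operatorname{st}_+(A)$ of a symmetric entrywise nonnegative $n\times n$ matrix $A$ is the minimal $k$ such that $A=BCB^T$ with $B$ an entrywise nonnegative $n\times k$ matrix and $C$ a symmetric entrywise nonnegative $k\times k$ matrix. $\operatorname{rk}_+(A)$ is the minimal $k$ such that $A=UV^T$ with $U,V$ entrywise nonnegative $n\times k$ matrices. *)

theory Defs
  imports Jordan_Normal_Form.DL_Rank_Submatrix
begin

definition nonneg_mat :: "real mat \<Rightarrow> bool" where
  "nonneg_mat M \<longleftrightarrow> (\<forall>i < dim_row M. \<forall>j < dim_col M. M $$ (i, j) \<ge> 0)"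

definition real_rank :: "real mat \<Rightarrow> nat" where
  "real_rank A = vec_space.rank (dim_row A) A"

definition nonneg_rank :: "real mat \<Rightarrow> nat" where
  "nonneg_rank A = (LEAST k. \<exists>U V. U \<in> carrier_mat (dim_row A) k \<and> V \<in> carrier_mat (dim_col A) k
      \<and> nonneg_mat U \<and> nonneg_mat V \<and> A = U * transpose_mat V)"

definition snt_rank :: "real mat \<Rightarrow> nat" where
  "snt_rank A = (LEAST k. \<exists>B C. B \<in> carrier_mat (dim_row A) k \<and> C \<in> carrier_mat k k
      \<and> nonneg_mat B \<and> nonneg_mat C \<and> transpose_mat C = C
      \<and> A = B * C * transpose_mat B)"

definition A7 :: "real mat" where
  "A7 = mat_of_rows_list 4 [[1,1,2,2],[1,0,1,2],[2,1,0,1],[2,2,1,1]]"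

end

theory Submission imports Defs begin

lemma sum3: "(\<Sum>l<(3::nat). f l) = f 0 + f 1 + (f 2 :: real)"
  by (simp add: eval_nat_numeral)
lemma sum4: "(\<Sum>l<(4::nat). f l) = f 0 + f 1 + f 2 + (f 3 :: real)"
  by (simp add: eval_nat_numeral)

definition q :: "(nat \<Rightarrow> nat \<Rightarrow> real) \<Rightarrow> (nat \<Rightarrow> real) \<Rightarrow> (nat \<Rightarrow> real) \<Rightarrow> real" where
  "q c u v = (\<Sum>l<(3::nat). \<Sum>m<(3::nat). u l * c l m * v m)"

lemma q_exp: "q c u v = u 0 * c 0 0 * v 0 + u 0 * c 0 1 * v 1 + u 0 * c 0 2 * v 2
  + (u 1 * c 1 0 * v 0 + u 1 * c 1 1 * v 1 + u 1 * c 1 2 * v 2)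
  + (u 2 * c 2 0 * v 0 + u 2 * c 2 1 * v 1 + u 2 * c 2 2 * v 2)"
  by (simp add: q_def sum3)

lemma three_cases: "(l::nat) < 3 \<Longrightarrow> l = 0 \<or> l = 1 \<or> l = 2" by auto

lemma key_real:
  fixes c :: "nat \<Rightarrow> nat \<Rightarrow> real" and u0 u1 u2 :: "nat \<Rightarrow> real"
  assumes cnn: "\<And>l m. l<3 \<Longrightarrow> m<3 \<Longrightarrow> c l m \<ge> 0"
  and csym: "\<And>l m. l<3 \<Longrightarrow> m<3 \<Longrightarrow> c l m = c m l"
  and cinj: "\<And>f0 f1 f2. c 0 0*f0 + c 0 1*f1 + c 0 2*f2 = 0 \<Longrightarrow> c 1 0*f0 + c 1 1*f1 + c 1 2*f2 = 0
     \<Longrightarrow> c 2 0*f0 + c 2 1*f1 + c 2 2*f2 = 0 \<Longrightarrow> f0 = 0 \<and> f1 = 0 \<and> f2 = 0"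
  and n0: "\<And>l. l<3 \<Longrightarrow> u0 l \<ge> 0"
  and n1: "\<And>l. l<3 \<Longrightarrow> u1 l \<ge> 0"
  and n2: "\<And>l. l<3 \<Longrightarrow> u2 l \<ge> 0"
  and n3: "\<And>l. l<3 \<Longrightarrow> u0 l - u1 l + u2 l \<ge> 0"
  and q00: "q c u0 u0 = 1" and q01: "q c u0 u1 = 1" and q11: "q c u1 u1 = 0"
  and q22: "q c u2 u2 = 0" and q12: "q c u1 u2 = 1"
  shows False
proof -
  have s: "c 1 0 = c 0 1" "c 2 0 = c 0 2" "c 2 1 = c 1 2" using csym by auto
  have zero_terms: "u l * c l m * u m = 0"
    if nu: "\<And>l. l<3 \<Longrightarrow> u l \<ge> 0" and z: "q c u u = 0" and lm: "l<3" "m<3" for u l m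
  proof -
    have tnn: "\<And>l m. l<3 \<Longrightarrow> m<3 \<Longrightarrow> u l * c l m * u m \<ge> 0"
      using nu cnn by (simp add: mult_nonneg_nonneg)
    have inn: "\<And>l. l \<in> {..<3} \<Longrightarrow> (\<Sum>m<(3::nat). u l * c l m * u m) \<ge> 0"
      using tnn by (auto intro!: sum_nonneg)
    have "(\<Sum>m<(3::nat). u l * c l m * u m) = 0"
      using z inn lm sum_nonneg_eq_0_iff[of "{..<3}" "\<lambda>l. (\<Sum>m<(3::nat). u l * c l m * u m)"]
      unfolding q_def by auto
    then show ?thesis using tnn lm sum_nonneg_eq_0_iff[of "{..<3}" "\<lambda>m. u l * c l m * u m"] by auto
  qed
  have block01: False if "c 0 0 = 0" "c 0 1 = 0" "c 1 1 = 0"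
  proof -
    have "c 2 1 = 0 \<and> c 2 0 = 0" using cinj[of "c 2 1" "- c 2 0" 0] that s by (simp add: algebra_simps)
    then show False using cinj[of 1 0 0] that s by simp
  qed
  have block02: False if "c 0 0 = 0" "c 0 2 = 0" "c 2 2 = 0"
  proof -
    have "c 1 2 = 0 \<and> c 1 0 = 0" using cinj[of "c 1 2" 0 "- c 1 0"] that s by (simp add: algebra_simps)
    then show False using cinj[of 1 0 0] that s by simp
  qed
  have block12: False if "c 1 1 = 0" "c 1 2 = 0" "c 2 2 = 0"
  proof -
    have "c 0 2 = 0 \<and> c 0 1 = 0" using cinj[of 0 "c 0 2" "- c 0 1"] that s by (simp add: algebra_simps)
    then show False using cinj[of 0 1 0] that s by simp
  qed
  have block: False if "l<3" "m<3" "l\<noteq>m" "c l l = 0" "c l m = 0" "c m m = 0" for l m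
    using three_cases[OF that(1)] three_cases[OF that(2)] that block01 block02 block12 s by auto
  have single: "u l * u m = 0"
    if nu: "\<And>l. l<3 \<Longrightarrow> u l \<ge> 0" and z: "q c u u = 0" and lm: "l<3" "m<3" "l\<noteq>m" for u l m
  proof (rule ccontr)
    assume "u l * u m \<noteq> 0"
    then have p: "u l \<noteq> 0" "u m \<noteq> 0" by auto
    have "c l l = 0" using zero_terms[OF nu z lm(1) lm(1)] p by simp
    moreover have "c l m = 0" using zero_terms[OF nu z lm(1) lm(2)] p by simp
    moreover have "c m m = 0" using zero_terms[OF nu z lm(2) lm(2)] p by simp
    ultimately show False using block lm by blast
  qed
  have disj: "u1 l * u2 l = 0" if l: "l<3" for l
  proof (rule ccontr)
    assume "u1 l * u2 l \<noteq> 0"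
    then have p: "u1 l \<noteq> 0" "u2 l \<noteq> 0" by auto
    have cll: "c l l = 0" using zero_terms[OF n1 q11 l l] p by simp
    have o1: "u1 m = 0" if "m<3" "m\<noteq>l" for m using single[OF n1 q11 l that(1)] that p by simp
    have o2: "u2 m = 0" if "m<3" "m\<noteq>l" for m using single[OF n2 q22 l that(1)] that p by simp
    have "u1 l' * c l' m' * u2 m' = 0" if "l' \<in> {..<3}" "m' \<in> {..<3}" for l' m'
      using o1[of l'] o2[of m'] cll that by (cases "l' = l"; cases "m' = l") auto
    then have "q c u1 u2 = 0" unfolding q_def by (simp add: sum.neutral)
    then show False using q12 by simp
  qed
  have ge: "u1 l \<le> u0 l" if l: "l<3" for l
  proof (cases "u1 l = 0")
    case True then show ?thesis using n0 l by simp
  next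
    case False
    then have "u2 l = 0" using disj[OF l] by simp
    then show ?thesis using n3[OF l] by simp
  qed
  define d where "d = (\<lambda>l. u0 l - u1 l)"
  have ident: "q c u0 u0 - 2*q c u0 u1 + q c u1 u1 = q c d d"
    unfolding q_exp s d_def by (simp add: algebra_simps)
  have "q c d d \<ge> 0" unfolding q_def using ge cnn
    by (intro sum_nonneg mult_nonneg_nonneg) (auto simp: d_def)
  then show False using ident q00 q01 q11 by simp
qed

lemma four_cases: "(l::nat) < 4 \<Longrightarrow> l = 0 \<or> l = 1 \<or> l = 2 \<or> l = 3" by auto

lemma A7_carrier: "A7 \<in> carrier_mat 4 4"
proof -
  have "length [[1, 1, 2, 2], [1, 0, 1, 2], [2, 1, 0, 1], [2, 2, 1, 1::real]] = 4" by simp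
  then show ?thesis unfolding A7_def mat_of_rows_list_def by (metis mat_carrier)
qed

lemma A7_ent: "i < 4 \<Longrightarrow> j < 4 \<Longrightarrow> A7 $$ (i,j) = [[1, 1, 2, 2], [1, 0, 1, 2], [2, 1, 0, 1], [2, 2, 1, 1::real]] ! i ! j"
  by (simp add: A7_def mat_of_rows_list_def)

lemma A7_vals: "A7$$(0,0) = 1" "A7$$(0,1) = 1" "A7$$(0,2) = 2" "A7$$(0,3) = 2"
  "A7$$(1,0) = 1" "A7$$(1,1) = 0" "A7$$(1,2) = 1" "A7$$(1,3) = 2"
  "A7$$(2,0) = 2" "A7$$(2,1) = 1" "A7$$(2,2) = 0" "A7$$(2,3) = 1"
  "A7$$(3,0) = 2" "A7$$(3,1) = 2" "A7$$(3,2) = 1" "A7$$(3,3) = 1"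
  by (simp_all add: A7_def mat_of_rows_list_def)

lemmas A7_valsS = A7_vals[simplified]

lemma mv3: "G \<in> carrier_mat 3 3 \<Longrightarrow> v \<in> carrier_vec 3 \<Longrightarrow> i < 3 \<Longrightarrow>
  (G *\<^sub>v v) $ i = G$$(i,0)*v$0 + G$$(i,1)*v$1 + G$$(i,2)*(v$2::real)"
  by (simp add: mult_mat_vec_def scalar_prod_def sum3 atLeast0LessThan)

lemma mv4: "G \<in> carrier_mat 4 4 \<Longrightarrow> v \<in> carrier_vec 4 \<Longrightarrow> i < 4 \<Longrightarrow>
  (G *\<^sub>v v) $ i = G$$(i,0)*v$0 + G$$(i,1)*v$1 + G$$(i,2)*v$2 + G$$(i,3)*(v$3::real)"
  by (simp add: mult_mat_vec_def scalar_prod_def sum4 atLeast0LessThan)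

lemma vec3_zero: "v \<in> carrier_vec 3 \<Longrightarrow> v$0 = 0 \<Longrightarrow> v$1 = 0 \<Longrightarrow> v$2 = (0::real) \<Longrightarrow> v = 0\<^sub>v 3"
  by (rule eq_vecI) (auto dest!: three_cases)

lemma prod_entry: "X \<in> carrier_mat n k \<Longrightarrow> Y \<in> carrier_mat m k \<Longrightarrow> i < n \<Longrightarrow> j < m \<Longrightarrow>
  (X * transpose_mat Y) $$ (i,j) = (\<Sum>l<k. X$$(i,l) * (Y$$(j,l) :: real))"
  by (simp add: scalar_prod_def atLeast0LessThan)

lemma detG: assumes G: "G \<in> carrier_mat 3 3"
  and "G$$(0,0) = 1" "G$$(0,1) = 1" "G$$(0,2) = 2"
  "G$$(1,0) = 1" "G$$(1,1) = 0" "G$$(1,2) = 1"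
  "G$$(2,0) = 2" "G$$(2,1) = 1" "G$$(2,2) = (0::real)"
  shows "det G \<noteq> 0"
proof
  assume "det G = 0"
  then obtain v where v: "v \<in> carrier_vec 3" "v \<noteq> 0\<^sub>v 3" "G *\<^sub>v v = 0\<^sub>v 3"
    using det_0_iff_vec_prod_zero_field[OF G] by auto
  have "(G *\<^sub>v v) $ i = 0" if "i < 3" for i using v(3) that by simp
  then have e: "v$0 + v$1 + 2*v$2 = 0" "v$0 + v$2 = 0" "2*v$0 + v$1 = 0"
    using mv3[OF G v(1), of 0] mv3[OF G v(1), of 1] mv3[OF G v(1), of 2] assms by auto
  then have "v$0 = 0" "v$1 = 0" "v$2 = 0" by linarith+
  then show False using vec3_zero[OF v(1)] v(2) by simp
qed

lemma low_real:
  fixes x y g :: "nat \<Rightarrow> nat \<Rightarrow> real"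
  assumes h: "\<And>i j. i<3 \<Longrightarrow> j<3 \<Longrightarrow> g i j = x i 0 * y j 0 + x i 1 * y j 1"
  and "g 0 0 = 1" "g 0 1 = 1" "g 0 2 = 2" "g 1 0 = 1" "g 1 1 = 0" "g 1 2 = 1"
      "g 2 0 = 2" "g 2 1 = 1" "g 2 2 = 0"
  shows False
proof -
  have "g 0 0*(g 1 1*g 2 2 - g 1 2*g 2 1) - g 0 1*(g 1 0*g 2 2 - g 1 2*g 2 0)
     + g 0 2*(g 1 0*g 2 1 - g 1 1*g 2 0) = 0"
  proof -
    have e: "g 0 0 = x 0 0 * y 0 0 + x 0 1 * y 0 1" "g 0 1 = x 0 0 * y 1 0 + x 0 1 * y 1 1"
      "g 0 2 = x 0 0 * y 2 0 + x 0 1 * y 2 1"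
      "g 1 0 = x 1 0 * y 0 0 + x 1 1 * y 0 1" "g 1 1 = x 1 0 * y 1 0 + x 1 1 * y 1 1"
      "g 1 2 = x 1 0 * y 2 0 + x 1 1 * y 2 1"
      "g 2 0 = x 2 0 * y 0 0 + x 2 1 * y 0 1" "g 2 1 = x 2 0 * y 1 0 + x 2 1 * y 1 1"
      "g 2 2 = x 2 0 * y 2 0 + x 2 1 * y 2 1" by (rule h; simp)+
    show ?thesis unfolding e by (simp add: algebra_simps)
  qed
  then show False using assms by simp
qed

lemma low_mat:
  assumes X: "X \<in> carrier_mat 4 k" and Y: "Y \<in> carrier_mat 4 k" and k: "k \<le> 2"
  and A: "A7 = X * transpose_mat Y"
  shows False
proof -
  define x where "x i l = (if l < k then X$$(i,l) else 0)" for i l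
  define y where "y i l = (if l < k then Y$$(i,l) else 0)" for i l
  have "A7$$(i,j) = x i 0 * y j 0 + x i 1 * y j 1" if "i<3" "j<3" for i j
  proof -
    have "A7$$(i,j) = (\<Sum>l<k. X$$(i,l) * Y$$(j,l))" using prod_entry[OF X Y, of i j] that A by simp
    moreover have "k = 0 \<or> k = 1 \<or> k = 2" using k by auto
    ultimately show ?thesis by (auto simp: x_def y_def eval_nat_numeral)
  qed
  then show False using low_real[of "\<lambda>i j. A7$$(i,j)" x y] A7_vals by blast
qed

lemma pick_lt: "i < n \<Longrightarrow> pick {..<n} i = i"
proof (induction i)
  case 0 then show ?case by (simp add: Least_equality)
next
  case (Suc i)
  have "pick {..<n} (Suc i) = (LEAST a. a \<in> {..<n} \<and> a > i)" using Suc by simp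
  also have "\<dots> = Suc i" by (rule Least_equality) (use Suc.prems in auto)
  finally show ?case .
qed

lemma card3: "card {i. i < (4::nat) \<and> i \<in> {..<3}} = 3"
proof -
  have "{i. i < (4::nat) \<and> i \<in> {..<3}} = {..<3}" by auto
  then show ?thesis by simp
qed

lemma rank3: "real_rank A7 = 3"
proof -
  have dr: "dim_row A7 = 4" "dim_col A7 = 4" using A7_carrier by auto
  have le: "vec_space.rank 4 A7 \<le> 4" by (rule vec_space.rank_le_nc[OF A7_carrier])
  have d0: "det A7 = 0"
  proof -
    define v where "v = vec 4 (\<lambda>i. if i = 0 \<or> i = 2 then 1 else -1::real)"
    have v: "v \<in> carrier_vec 4" by (simp add: v_def)
    have nz: "v \<noteq> 0\<^sub>v 4"
    proof
      assume "v = 0\<^sub>v 4"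
      then have "v $ 0 = 0" by simp
      then show False by (simp add: v_def)
    qed
    have vv: "v$0 = 1" "v$1 = -1" "v$2 = 1" "v$3 = -1" by (simp_all add: v_def)
    have "(A7 *\<^sub>v v) $ i = 0" if "i < 4" for i
    proof -
      have "(A7 *\<^sub>v v) $ i = A7$$(i,0)*v$0 + A7$$(i,1)*v$1 + A7$$(i,2)*v$2 + A7$$(i,3)*v$3"
        by (rule mv4[OF A7_carrier v that])
      then show ?thesis using four_cases[OF that] vv A7_vals by auto
    qed
    then have "A7 *\<^sub>v v = 0\<^sub>v 4" using dr by (intro eq_vecI) auto
    then show ?thesis using det_0_iff_vec_prod_zero_field[OF A7_carrier] v nz by blast
  qed
  have ne: "vec_space.rank 4 A7 \<noteq> 4" using vec_space.det_rank_iff[OF A7_carrier] d0 by simp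
  define S where "S = submatrix A7 {..<3} {..<3}"
  have "dim_row S = 3" "dim_col S = 3" unfolding S_def by (simp_all only: dim_submatrix dr card3)
  then have S: "S \<in> carrier_mat 3 3" by (intro carrier_matI)
  have Sent: "S $$ (i,j) = A7 $$ (i,j)" if "i < 3" "j < 3" for i j
  proof -
    have "S $$ (i,j) = A7 $$ (pick {..<3} i, pick {..<3} j)" unfolding S_def
      by (rule submatrix_index) (simp_all only: dr card3 that)
    then show ?thesis using pick_lt[OF that(1)] pick_lt[OF that(2)] by simp
  qed
  have dS: "det S \<noteq> 0" by (rule detG[OF S]) (simp_all add: Sent A7_vals A7_valsS)
  have ge: "3 \<le> vec_space.rank 4 A7"
    using vec_space.rank_gt_minor[OF A7_carrier dS[unfolded S_def]] card3 by simp
  show ?thesis unfolding real_rank_def dr using le ne ge by linarith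
qed

lemma tri_entry: assumes X: "X \<in> carrier_mat n 3" and C: "C \<in> carrier_mat 3 3" and ij: "i < n" "j < n"
  shows "(X*C*transpose_mat X) $$ (i,j) = q (\<lambda>l m. C$$(l,m)) (\<lambda>l. X$$(i,l)) (\<lambda>l. X$$(j,l))"
proof -
  have XC: "X*C \<in> carrier_mat n 3" using X C by simp
  have e: "(X*C) $$ (i,m) = X$$(i,0)*C$$(0,m) + X$$(i,1)*C$$(1,m) + X$$(i,2)*C$$(2,m)" if "m < 3" for m
    using X C ij that by (simp add: scalar_prod_def sum3 atLeast0LessThan)
  have e0: "(X*C) $$ (i,0) = X$$(i,0)*C$$(0,0) + X$$(i,1)*C$$(1,0) + X$$(i,2)*C$$(2,0)" by (rule e) simp
  have e1: "(X*C) $$ (i,1) = X$$(i,0)*C$$(0,1) + X$$(i,1)*C$$(1,1) + X$$(i,2)*C$$(2,1)" by (rule e) simp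
  have e2: "(X*C) $$ (i,2) = X$$(i,0)*C$$(0,2) + X$$(i,1)*C$$(1,2) + X$$(i,2)*C$$(2,2)" by (rule e) simp
  have "(X*C*transpose_mat X) $$ (i,j) = (\<Sum>m<3. (X*C)$$(i,m) * X$$(j,m))" by (rule prod_entry[OF XC X ij])
  also have "\<dots> = (X*C)$$(i,0)*X$$(j,0) + (X*C)$$(i,1)*X$$(j,1) + (X*C)$$(i,2)*X$$(j,2)" by (rule sum3)
  also have "\<dots> = q (\<lambda>l m. C$$(l,m)) (\<lambda>l. X$$(i,l)) (\<lambda>l. X$$(j,l))"
    unfolding e0 e1 e2 q_exp by (simp add: algebra_simps)
  finally show ?thesis .
qed

lemma mc_vec: assumes X: "X \<in> carrier_mat 3 3" and C: "C \<in> carrier_mat 3 3" and w: "w \<in> carrier_vec 3"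
  and i: "i < 3"
  shows "((X*C) *\<^sub>v w) $ i = q (\<lambda>l m. C$$(l,m)) (\<lambda>l. X$$(i,l)) (\<lambda>m. w$m)"
proof -
  have XC: "X*C \<in> carrier_mat 3 3" using X C by simp
  have e: "(X*C) $$ (i,m) = X$$(i,0)*C$$(0,m) + X$$(i,1)*C$$(1,m) + X$$(i,2)*C$$(2,m)" if "m < 3" for m
    using X C i that by (simp add: scalar_prod_def sum3 atLeast0LessThan)
  have e0: "(X*C) $$ (i,0) = X$$(i,0)*C$$(0,0) + X$$(i,1)*C$$(1,0) + X$$(i,2)*C$$(2,0)" by (rule e) simp
  have e1: "(X*C) $$ (i,1) = X$$(i,0)*C$$(0,1) + X$$(i,1)*C$$(1,1) + X$$(i,2)*C$$(2,1)" by (rule e) simp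
  have e2: "(X*C) $$ (i,2) = X$$(i,0)*C$$(0,2) + X$$(i,1)*C$$(1,2) + X$$(i,2)*C$$(2,2)" by (rule e) simp
  show ?thesis unfolding mv3[OF XC w i] e0 e1 e2 q_exp by (simp add: algebra_simps)
qed

lemma q_lin: "q c u (\<lambda>m. a m - b m + d m - e m) = q c u a - q c u b + q c u d - q c u e"
  by (simp add: q_exp algebra_simps)

lemma snt3:
  assumes B: "B \<in> carrier_mat 4 3" and C: "C \<in> carrier_mat 3 3"
  and nB: "nonneg_mat B" and nC: "nonneg_mat C" and sC: "transpose_mat C = C"
  and A: "A7 = B * C * transpose_mat B"
  shows False
proof -
  define c where "c = (\<lambda>l m. C$$(l,m))"
  define b where "b = (\<lambda>i l. B$$(i,l))"
  have ent: "A7$$(i,j) = q c (b i) (b j)" if "i<4" "j<4" for i j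
    unfolding c_def b_def A by (rule tri_entry[OF B C that])
  define M where "M = mat 3 3 (\<lambda>(i,l). B$$(i,l))"
  have M: "M \<in> carrier_mat 3 3" by (simp add: M_def)
  have Ment1: "q c (\<lambda>l. M$$(i,l)) v = q c (b i) v" if "i<3" for i v
    using that by (simp add: q_exp M_def b_def)
  have Ment2: "q c u (\<lambda>l. M$$(i,l)) = q c u (b i)" if "i<3" for i u
    using that by (simp add: q_exp M_def b_def)
  define G where "G = M*C*transpose_mat M"
  have G: "G \<in> carrier_mat 3 3" using M C by (simp add: G_def)
  have Gent: "G$$(i,j) = A7$$(i,j)" if "i<3" "j<3" for i j
  proof -
    have "G$$(i,j) = q c (\<lambda>l. M$$(i,l)) (\<lambda>l. M$$(j,l))" unfolding G_def c_def by (rule tri_entry[OF M C that])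
    also have "\<dots> = q c (b i) (b j)" using Ment1 Ment2 that by simp
    also have "\<dots> = A7$$(i,j)" using ent that by simp
    finally show ?thesis .
  qed
  have dG: "det G \<noteq> 0" by (rule detG[OF G]) (simp_all add: Gent A7_vals A7_valsS)
  have MC: "M*C \<in> carrier_mat 3 3" using M C by simp
  have "det G = det (M*C) * det (transpose_mat M)" unfolding G_def
    by (rule det_mult[OF MC]) (use M in simp)
  then have dMC: "det (M*C) \<noteq> 0" using dG by auto
  have dC: "det C \<noteq> 0" using dMC det_mult[OF M C] by auto
  have cinj: "f0 = 0 \<and> f1 = 0 \<and> f2 = 0"
    if e: "c 0 0*f0 + c 0 1*f1 + c 0 2*f2 = 0" "c 1 0*f0 + c 1 1*f1 + c 1 2*f2 = 0"
      "c 2 0*f0 + c 2 1*f1 + c 2 2*f2 = 0" for f0 f1 f2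
  proof -
    define v where "v = vec 3 (\<lambda>i. if i = 0 then f0 else if i = 1 then f1 else f2)"
    have v: "v \<in> carrier_vec 3" by (simp add: v_def)
    have vv: "v$0 = f0" "v$1 = f1" "v$2 = f2" by (simp_all add: v_def)
    have "(C *\<^sub>v v) $ i = 0" if "i < 3" for i
    proof -
      have "(C *\<^sub>v v) $ i = C$$(i,0)*v$0 + C$$(i,1)*v$1 + C$$(i,2)*v$2"
        by (rule mv3[OF C v that])
      then show ?thesis using three_cases[OF that] vv e unfolding c_def by auto
    qed
    then have "C *\<^sub>v v = 0\<^sub>v 3" using C by (intro eq_vecI) auto
    then have "v = 0\<^sub>v 3" using det_0_iff_vec_prod_zero_field[OF C] dC v by auto
    then have "v$0 = 0" "v$1 = 0" "v$2 = 0" by simp_all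
    then show ?thesis by (simp add: v_def)
  qed
  define w where "w = vec 3 (\<lambda>l. b 0 l - b 1 l + b 2 l - b 3 l)"
  have w: "w \<in> carrier_vec 3" by (simp add: w_def)
  have "(M*C) *\<^sub>v w = 0\<^sub>v 3"
  proof (rule eq_vecI)
    fix i assume "i < dim_vec (0\<^sub>v 3 :: real vec)"
    then have i: "i < 3" by simp
    have "((M*C) *\<^sub>v w)$i = q c (\<lambda>l. M$$(i,l)) (\<lambda>m. w$m)"
      unfolding c_def by (rule mc_vec[OF M C w i])
    also have "\<dots> = q c (b i) (\<lambda>m. b 0 m - b 1 m + b 2 m - b 3 m)"
      using Ment1[OF i] by (simp add: q_exp w_def)
    also have "\<dots> = q c (b i) (b 0) - q c (b i) (b 1) + q c (b i) (b 2) - q c (b i) (b 3)"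
      by (rule q_lin)
    also have "\<dots> = A7$$(i,0) - A7$$(i,1) + A7$$(i,2) - A7$$(i,3)" using ent i by simp
    also have "\<dots> = 0" using three_cases[OF i] A7_vals by auto
    finally show "((M*C) *\<^sub>v w)$i = 0\<^sub>v 3 $ i" using i by simp
  qed (use M C in simp)
  then have "w = 0\<^sub>v 3" using det_0_iff_vec_prod_zero_field[OF MC] dMC w by auto
  then have b3: "b 3 l = b 0 l - b 1 l + b 2 l" if "l<3" for l
  proof -
    have "w $ l = 0" using \<open>w = 0\<^sub>v 3\<close> that by simp
    then show ?thesis using that by (simp add: w_def)
  qed
  have cnn: "c l m \<ge> 0" if "l<3" "m<3" for l m
    using nC C that unfolding nonneg_mat_def c_def by auto
  have csym: "c l m = c m l" if "l<3" "m<3" for l m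
  proof -
    have "C$$(l,m) = (transpose_mat C)$$(l,m)" using sC by simp
    also have "\<dots> = C$$(m,l)" using C that by simp
    finally show ?thesis by (simp add: c_def)
  qed
  have bnn: "b i l \<ge> 0" if "i<4" "l<3" for i l
    using nB B that unfolding nonneg_mat_def b_def by auto
  show False
  proof (rule key_real[of c "b 0" "b 1" "b 2"])
    show "\<And>l m. l<3 \<Longrightarrow> m<3 \<Longrightarrow> c l m \<ge> 0" by (rule cnn)
    show "\<And>l m. l<3 \<Longrightarrow> m<3 \<Longrightarrow> c l m = c m l" by (rule csym)
    show "\<And>f0 f1 f2. c 0 0*f0 + c 0 1*f1 + c 0 2*f2 = 0 \<Longrightarrow> c 1 0*f0 + c 1 1*f1 + c 1 2*f2 = 0
     \<Longrightarrow> c 2 0*f0 + c 2 1*f1 + c 2 2*f2 = 0 \<Longrightarrow> f0 = 0 \<and> f1 = 0 \<and> f2 = 0" by (rule cinj)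
    show "\<And>l. l<3 \<Longrightarrow> b 0 l \<ge> 0" "\<And>l. l<3 \<Longrightarrow> b 1 l \<ge> 0" "\<And>l. l<3 \<Longrightarrow> b 2 l \<ge> 0"
      using bnn by auto
    show "\<And>l. l<3 \<Longrightarrow> b 0 l - b 1 l + b 2 l \<ge> 0" proof -
      fix l :: nat assume l: "l < 3"
      have "b 3 l \<ge> 0" using bnn[of 3 l] l by simp
      then show "b 0 l - b 1 l + b 2 l \<ge> 0" using b3[OF l] by simp
    qed
    show "q c (b 0) (b 0) = 1" "q c (b 0) (b 1) = 1" "q c (b 1) (b 1) = 0"
      "q c (b 2) (b 2) = 0" "q c (b 1) (b 2) = 1"
      using ent[of 0 0] ent[of 0 1] ent[of 1 1] ent[of 2 2] ent[of 1 2] A7_vals by simp_all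
  qed
qed

lemma nonneg_rank3: "nonneg_rank A7 = 3"
proof -
  define U where "U = mat_of_rows_list 3 [[1,0,1],[1,0,0],[0,1,0],[0,1,1::real]]"
  define V where "V = mat_of_rows_list 3 [[1,2,0],[0,1,1],[1,0,1],[2,1,0::real]]"
  have U: "U \<in> carrier_mat 4 3"
  proof -
    have "length [[1,0,1],[1,0,0],[0,1,0],[0,1,1::real]] = 4" by simp
    then show ?thesis unfolding U_def mat_of_rows_list_def by (metis mat_carrier)
  qed
  have V: "V \<in> carrier_mat 4 3"
  proof -
    have "length [[1,2,0],[0,1,1],[1,0,1],[2,1,0::real]] = 4" by simp
    then show ?thesis unfolding V_def mat_of_rows_list_def by (metis mat_carrier)
  qed
  have Ue: "U$$(i,l) = [[1,0,1],[1,0,0],[0,1,0],[0,1,1::real]] ! i ! l" if "i<4" "l<3" for i l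
    using that by (simp add: U_def mat_of_rows_list_def)
  have Ve: "V$$(i,l) = [[1,2,0],[0,1,1],[1,0,1],[2,1,0::real]] ! i ! l" if "i<4" "l<3" for i l
    using that by (simp add: V_def mat_of_rows_list_def)
  have nU: "nonneg_mat U" unfolding nonneg_mat_def
  proof (intro allI impI)
    fix i l assume "i < dim_row U" "l < dim_col U"
    then have il: "i < 4" "l < 3" using U by auto
    show "U$$(i,l) \<ge> 0" using four_cases[OF il(1)] three_cases[OF il(2)] Ue[OF il] by auto
  qed
  have nV: "nonneg_mat V" unfolding nonneg_mat_def
  proof (intro allI impI)
    fix i l assume "i < dim_row V" "l < dim_col V"
    then have il: "i < 4" "l < 3" using V by auto
    show "V$$(i,l) \<ge> 0" using four_cases[OF il(1)] three_cases[OF il(2)] Ve[OF il] by auto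
  qed
  have AUV: "A7 = U * transpose_mat V"
  proof (rule eq_matI)
    fix i j assume "i < dim_row (U * transpose_mat V)" "j < dim_col (U * transpose_mat V)"
    then have ij: "i < 4" "j < 4" using U V by auto
    have "(U * transpose_mat V) $$ (i,j) = U$$(i,0)*V$$(j,0) + U$$(i,1)*V$$(j,1) + U$$(i,2)*V$$(j,2)"
      using prod_entry[OF U V ij] by (simp add: sum3)
    moreover have "U$$(i,0)*V$$(j,0) + U$$(i,1)*V$$(j,1) + U$$(i,2)*V$$(j,2) = A7$$(i,j)"
      using four_cases[OF ij(1)] four_cases[OF ij(2)] Ue[of i 0] Ue[of i 1] Ue[of i 2]
        Ve[of j 0] Ve[of j 1] Ve[of j 2] ij A7_vals by auto
    ultimately show "A7 $$ (i,j) = (U * transpose_mat V) $$ (i,j)" by simp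
  qed (use U V A7_carrier in auto)
  have dr: "dim_row A7 = 4" "dim_col A7 = 4" using A7_carrier by auto
  show ?thesis unfolding nonneg_rank_def dr
  proof (rule Least_equality)
    show "\<exists>U V. U \<in> carrier_mat 4 3 \<and> V \<in> carrier_mat 4 3 \<and> nonneg_mat U \<and> nonneg_mat V
      \<and> A7 = U * transpose_mat V" using U V nU nV AUV by blast
  next
    fix k assume "\<exists>U V. U \<in> carrier_mat 4 k \<and> V \<in> carrier_mat 4 k \<and> nonneg_mat U \<and> nonneg_mat V
      \<and> A7 = U * transpose_mat V"
    then obtain X Y where X: "X \<in> carrier_mat 4 k" and Y: "Y \<in> carrier_mat 4 k"
      and A: "A7 = X * transpose_mat Y" by blast
    show "3 \<le> k"
    proof (rule ccontr)
      assume "\<not> 3 \<le> k"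
      then have "k \<le> 2" by simp
      then show False using low_mat[OF X Y _ A] by simp
    qed
  qed
qed

lemma snt4: "snt_rank A7 = 4"
proof -
  have dr: "dim_row A7 = 4" "dim_col A7 = 4" using A7_carrier by auto
  have I: "(1\<^sub>m 4 :: real mat) \<in> carrier_mat 4 4" by simp
  have nI: "nonneg_mat (1\<^sub>m 4 :: real mat)" unfolding nonneg_mat_def by simp
  have nA: "nonneg_mat A7" unfolding nonneg_mat_def dr
  proof (intro allI impI)
    fix i j :: nat assume ij: "i < 4" "j < 4"
    show "A7$$(i,j) \<ge> 0" using four_cases[OF ij(1)] four_cases[OF ij(2)] A7_vals by auto
  qed
  have sA: "transpose_mat A7 = A7"
  proof (rule eq_matI)
    fix i j assume "i < dim_row A7" "j < dim_col A7"
    then have ij: "i < 4" "j < 4" using dr by auto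
    have "transpose_mat A7 $$ (i,j) = A7 $$ (j,i)" using ij dr by simp
    also have "\<dots> = A7 $$ (i,j)" using four_cases[OF ij(1)] four_cases[OF ij(2)] A7_vals by auto
    finally show "transpose_mat A7 $$ (i,j) = A7 $$ (i,j)" .
  qed (use dr in auto)
  have eqI: "A7 = 1\<^sub>m 4 * A7 * transpose_mat (1\<^sub>m 4)" using A7_carrier by simp
  show ?thesis unfolding snt_rank_def dr
  proof (rule Least_equality)
    show "\<exists>B C. B \<in> carrier_mat 4 4 \<and> C \<in> carrier_mat 4 4 \<and> nonneg_mat B \<and> nonneg_mat C
      \<and> transpose_mat C = C \<and> A7 = B * C * transpose_mat B"
      using I A7_carrier nI nA sA eqI by blast
  next
    fix k assume "\<exists>B C. B \<in> carrier_mat 4 k \<and> C \<in> carrier_mat k k \<and> nonneg_mat B \<and> nonneg_mat C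
      \<and> transpose_mat C = C \<and> A7 = B * C * transpose_mat B"
    then obtain B C where B: "B \<in> carrier_mat 4 k" and C: "C \<in> carrier_mat k k"
      and nB: "nonneg_mat B" and nC: "nonneg_mat C" and sC: "transpose_mat C = C"
      and A: "A7 = B * C * transpose_mat B" by blast
    show "4 \<le> k"
    proof (rule ccontr)
      assume "\<not> 4 \<le> k"
      then have "k \<le> 2 \<or> k = 3" by auto
      then show False
      proof
        assume k: "k \<le> 2"
        have BC: "B * C \<in> carrier_mat 4 k" using B C by simp
        show False using low_mat[OF BC B k A] .
      next
        assume k: "k = 3"
        show False using snt3[of B C] B C nB nC sC A k by simp
      qed
    qed
  qed
qed

theorem mainTheorem7:
  shows "real_rank A7 = 3 \<and> nonneg_rank A7 = 3 \<and> snt_rank A7 = 4"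
  using rank3 nonneg_rank3 snt4 by simp

end
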